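(* Assume $\sum_j2^j\eta_j=\infty$, $\theta<1$ and $\widetilde h=\infty$. Then with probability one: (1) for every $u\in\mathcal{U}$, the set $u\mathcal{U}^*\cap\widetilde S$ is nonempty; (2) there is a real $\widetilde\kappa\ge1$ such that $\#\widetilde S_j\le\widetilde\kappa\,2^j\eta_{j-1}j^2$ for all $j\ge1$; (3) if $\theta<0$ then $\Theta=\emptyset$; if $\theta\ge0$ then there is a real $\kappa\ge1$ such that $\#S_j\le\kappa\,2^{(1-\theta)j/2}\prod_{\ell=\underline{j}}^{j-1}\gamma_\ell$ for all $j\ge0$ (empty products equal $1$).
   Context: Let $\mathbb{T}=\mathbb{R}/\mathbb{Z}$ with canonical surjection $\phi:\mathbb{R}\to\mathbb{T}$. Let $\mathcal{U}=\{\varnothing\}\cup\bigcup_{j\ge1}\{0,1\}^j$ be the set of finite words over $\{0,1\}$; for $u=u_1\dots u_j$ write $|u|=j$ ($|\varnothing|=0$), $\pi(u)=u_1\dots u_{j-1}$ for $j\ge1$, $\mathcal{U}^*=\mathcal{U}\setminus\{\varnothing\}$, and $u\mathcal{U}$ (resp. $u\mathcal{U}^*$) for the words $uw$ with $w\in\mathcal{U}$ (resp. $w\in\mathcal{U}^*$). For each $j\ge0$, $\nu_{0,j},\nu_{1,j}$ are probability measures on $\{0,1\}^2$, and $X=(X_u)_{u\in\mathcal{U}}$ is a $\{0,1\}$-valued process with $\mathbb{P}((X_{u0},X_{u1})\in A\mid\mathcal{G}_u)=\nu_{X_u,|u|}(A)$ for all $u$, $A\subseteq\{0,1\}^2$,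 where $\mathcal{G}_u=\sigma(X_v:v\in\mathcal{U}\setminus u\mathcal{U}^* )$. Fix $\underline{h}>0$. Parameters: $\gamma_j=2\nu_{1,j}(\{(1,1)\})+\nu_{1,j}(\{(1,0),(0,1)\})$; $\eta_j=1-\nu_{0,j}(\{(0,0)\})$; $\underline{j}=\inf\{j_0\ge0:\gamma_j>0\ \forall j\ge j_0\}$; $\theta=\liminf_j\frac{\log\gamma_{\underline{j}}+\dots+\log\gamma_j}{j\log2}$ if $\underline{j}<\infty$, else $-\infty$; $\widetilde h=\inf\{h>0:\sum_j2^{(1-\underline{h}/h)j}\eta_j=\infty\}$ ($\inf\emptyset=\infty$). $S_j=\{u:|u|=j,X_u=1\}$; $\widetilde S=\{u\in\mathcal{U}^*:X_u=1,X_{\pi(u)}=0\}$ and $\widetilde S_j=\widetilde S\cap\{0,1\}^j$. $\Theta$: for $u\in\mathcal{U}$, $\tau_u=\{v\in u\mathcal{U}:X_{v_1\dots v_j}=1\ \forall j\in\{|u|,\dots,|v|\}\}$, $\partial\tau_u=\{\zeta\in\{0,1\}^{\mathbb{N}}:\zeta_1\dots\zeta_j\in\tau_u\ \forall j\ge|u|\}$, and $\Theta=\phi(\{\sum_{j\ge1}\zeta_j2^{-j}:u\in\mathcal{U},\zeta\in\partial\tau_u\})$. *)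

theory Defs
  imports "HOL-Probability.Probability"
begin

text \<open>Words over {0,1} are bool lists (False = 0, True = 1); the word u0 is u @ [False],
  u1 is u @ [True]; |u| = length u; \<pi>(u) = butlast u.
  The measures \<nu>_{i,j} on {0,1}^2 are pmfs nu i j on bool \<times> bool (i = X_u, False = 0).
  The process X : bool list \<Rightarrow> \<Omega> \<Rightarrow> bool, X u \<omega> = True meaning X_u = 1.\<close>

definition strict_desc :: "bool list \<Rightarrow> bool list set" where
  "strict_desc u = {u @ w | w. w \<noteq> []}"

definition G_alg :: "'a measure \<Rightarrow> (bool list \<Rightarrow> 'a \<Rightarrow> bool) \<Rightarrow> bool list \<Rightarrow> 'a measure" where
  "G_alg M X u = sigma (space M) {X v -` B \<inter> space M | v B. v \<notin> strict_desc u}"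

definition branching_process ::
  "'a measure \<Rightarrow> (bool \<Rightarrow> nat \<Rightarrow> (bool \<times> bool) pmf) \<Rightarrow> (bool list \<Rightarrow> 'a \<Rightarrow> bool) \<Rightarrow> bool" where
  "branching_process M nu X \<longleftrightarrow>
     prob_space M \<and>
     (\<forall>u. X u \<in> measurable M (count_space UNIV)) \<and>
     (\<forall>u A. AE \<omega> in M.
        real_cond_exp M (G_alg M X u)
          (indicator {\<omega>\<in>space M. (X (u @ [False]) \<omega>, X (u @ [True]) \<omega>) \<in> A}) \<omega>
        = measure_pmf.prob (nu (X u \<omega>) (length u)) A)"

definition gamma :: "(bool \<Rightarrow> nat \<Rightarrow> (bool \<times> bool) pmf) \<Rightarrow> nat \<Rightarrow> real" where
  "gamma nu j = 2 * pmf (nu True j) (True, True)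
     + measure_pmf.prob (nu True j) {(True, False), (False, True)}"

definition eta :: "(bool \<Rightarrow> nat \<Rightarrow> (bool \<times> bool) pmf) \<Rightarrow> nat \<Rightarrow> real" where
  "eta nu j = 1 - pmf (nu False j) (False, False)"

definition jlow :: "(bool \<Rightarrow> nat \<Rightarrow> (bool \<times> bool) pmf) \<Rightarrow> enat" where
  "jlow nu = (if \<exists>j0. \<forall>j\<ge>j0. gamma nu j > 0
              then enat (LEAST j0. \<forall>j\<ge>j0. gamma nu j > 0) else \<infinity>)"

definition theta :: "(bool \<Rightarrow> nat \<Rightarrow> (bool \<times> bool) pmf) \<Rightarrow> ereal" where
  "theta nu = (if jlow nu < \<infinity> then
      liminf (\<lambda>j. ereal ((\<Sum>l\<in>{the_enat (jlow nu)..j}. ln (gamma nu l)) / (real j * ln 2)))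
    else -\<infinity>)"

definition htilde :: "(bool \<Rightarrow> nat \<Rightarrow> (bool \<times> bool) pmf) \<Rightarrow> real \<Rightarrow> ereal" where
  "htilde nu hl = Inf (ereal ` {h. h > 0 \<and>
      (\<Sum>j. ennreal (2 powr ((1 - hl / h) * real j) * eta nu j)) = \<top>})"

definition S_set :: "(bool list \<Rightarrow> 'a \<Rightarrow> bool) \<Rightarrow> 'a \<Rightarrow> nat \<Rightarrow> bool list set" where
  "S_set X \<omega> j = {u. length u = j \<and> X u \<omega>}"

definition Stilde :: "(bool list \<Rightarrow> 'a \<Rightarrow> bool) \<Rightarrow> 'a \<Rightarrow> bool list set" where
  "Stilde X \<omega> = {u. u \<noteq> [] \<and> X u \<omega> \<and> \<not> X (butlast u) \<omega>}"

definition Stilde_j :: "(bool list \<Rightarrow> 'a \<Rightarrow> bool) \<Rightarrow> 'a \<Rightarrow> nat \<Rightarrow> bool list set" where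
  "Stilde_j X \<omega> j = {u \<in> Stilde X \<omega>. length u = j}"

text \<open>\<tau>_u; a prefix v_1\<dots>v_j is take j v\<close>
definition tau :: "(bool list \<Rightarrow> 'a \<Rightarrow> bool) \<Rightarrow> 'a \<Rightarrow> bool list \<Rightarrow> bool list set" where
  "tau X \<omega> u = {v. (\<exists>w. v = u @ w) \<and> (\<forall>j\<in>{length u..length v}. X (take j v) \<omega>)}"

text \<open>\<partial>\<tau>_u; a sequence \<zeta> = (\<zeta>_1,\<zeta>_2,\<dots>) is represented as \<zeta> :: nat \<Rightarrow> bool with \<zeta>_k = \<zeta> (k-1),
  so \<zeta>_1\<dots>\<zeta>_j = map \<zeta> [0..<j]\<close>
definition boundary :: "(bool list \<Rightarrow> 'a \<Rightarrow> bool) \<Rightarrow> 'a \<Rightarrow> bool list \<Rightarrow> (nat \<Rightarrow> bool) set" where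
  "boundary X \<omega> u = {\<zeta>. \<forall>j\<ge>length u. map \<zeta> [0..<j] \<in> tau X \<omega> u}"

text \<open>\<Theta> \<subseteq> \<TT> = \<real>/\<int>, with \<TT> represented by [0,1) and \<phi> = frac\<close>
definition Theta :: "(bool list \<Rightarrow> 'a \<Rightarrow> bool) \<Rightarrow> 'a \<Rightarrow> real set" where
  "Theta X \<omega> = frac ` {(\<Sum>k. (if \<zeta> k then 1 else 0) / 2 ^ (k + 1)) | u \<zeta>. \<zeta> \<in> boundary X \<omega> u}"

end

theory Submission imports Defs begin

lemma event_in:
  fixes X :: "'v \<Rightarrow> 'a \<Rightarrow> bool"
  assumes fin: "finite V" and sp: "space N = space M"
    and mv: "\<And>v. v \<in> V \<Longrightarrow> {\<omega>\<in>space M. X v \<omega>} \<in> sets N"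
    and dep: "\<And>\<omega> \<omega>'. \<omega>\<in>space M \<Longrightarrow> \<omega>'\<in>space M \<Longrightarrow> (\<forall>v\<in>V. X v \<omega> = X v \<omega>') \<Longrightarrow> P \<omega> = P \<omega>'"
  shows "{\<omega>\<in>space M. P \<omega>} \<in> sets N"
proof -
  define Q where "Q f = {\<omega>\<in>space M. \<forall>v\<in>V. X v \<omega> = f v}" for f
  have Qs: "{\<omega>\<in>space M. \<forall>v\<in>W. X v \<omega> = f v} \<in> sets N" if "W \<subseteq> V" for W f
  proof -
    have "finite W" using that fin finite_subset by blast
    then show ?thesis using that
    proof (induction W rule: finite_induct)
      case empty
      then show ?case using sp sets.top[of N] by simp
    next
      case (insert v W)
      have m: "{\<omega>\<in>space M. X v \<omega>} \<in> sets N" using mv insert by auto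
      have "{\<omega>\<in>space M. X v \<omega> = f v} \<in> sets N"
      proof (cases "f v")
        case True then show ?thesis using m by simp
      next
        case False
        have "{\<omega>\<in>space M. X v \<omega> = f v} = space N - {\<omega>\<in>space M. X v \<omega>}" using False sp by auto
        then show ?thesis using m by auto
      qed
      moreover have "{\<omega>\<in>space M. \<forall>v'\<in>insert v W. X v' \<omega> = f v'} =
          {\<omega>\<in>space M. \<forall>v\<in>W. X v \<omega> = f v} \<inter> {\<omega>\<in>space M. X v \<omega> = f v}" by auto
      ultimately show ?case using insert by auto
    qed
  qed
  define F where "F = (\<lambda>\<omega>. restrict (\<lambda>v. X v \<omega>) V) ` {\<omega>\<in>space M. P \<omega>}"
  have "F \<subseteq> V \<rightarrow>\<^sub>E UNIV" unfolding F_def by auto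
  then have finF: "finite F" using finite_PiE[OF fin, of "\<lambda>_. UNIV :: bool set"] finite_subset by auto
  have eq: "{\<omega>\<in>space M. P \<omega>} = (\<Union>f\<in>F. Q f)"
  proof
    show "{\<omega>\<in>space M. P \<omega>} \<subseteq> (\<Union>f\<in>F. Q f)" unfolding F_def Q_def by force
    show "(\<Union>f\<in>F. Q f) \<subseteq> {\<omega>\<in>space M. P \<omega>}"
    proof
      fix \<omega> assume "\<omega> \<in> (\<Union>f\<in>F. Q f)"
      then obtain \<omega>0 where o0: "\<omega>0 \<in> space M" "P \<omega>0" and q: "\<omega> \<in> Q (restrict (\<lambda>v. X v \<omega>0) V)"
        unfolding F_def by auto
      then have "\<omega> \<in> space M" "\<forall>v\<in>V. X v \<omega> = X v \<omega>0" unfolding Q_def by auto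
      then show "\<omega> \<in> {\<omega>\<in>space M. P \<omega>}" using dep[of \<omega> \<omega>0] o0 by auto
    qed
  qed
  have "(\<Union>f\<in>F. Q f) \<in> sets N" using finF Qs[of V] unfolding Q_def by (intro sets.finite_UN) auto
  then show ?thesis using eq by simp
qed

definition L :: "nat \<Rightarrow> bool list set" where "L n = {w. length w = n}"

lemma finite_L[simp]: "finite (L n)" unfolding L_def by (rule finite_list_length)

lemma card_L: "card (L n) = 2 ^ n"
  using card_lists_length_eq[of "UNIV :: bool set" n] unfolding L_def by simp

lemma L_Suc_eq: "L (Suc n) = (\<lambda>(w,b). w @ [b]) ` (L n \<times> UNIV)"
proof
  show "L (Suc n) \<subseteq> (\<lambda>(w,b). w @ [b]) ` (L n \<times> UNIV)"
  proof
    fix x assume "x \<in> L (Suc n)"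
    then have "x \<noteq> []" "length x = Suc n" unfolding L_def by auto
    then have "x = butlast x @ [last x]" "butlast x \<in> L n" unfolding L_def by auto
    then show "x \<in> (\<lambda>(w,b). w @ [b]) ` (L n \<times> UNIV)" by (intro image_eqI[where x="(butlast x, last x)"]) auto
  qed
  show "(\<lambda>(w,b). w @ [b]) ` (L n \<times> UNIV) \<subseteq> L (Suc n)" unfolding L_def by auto
qed

lemma sum_L_Suc: "(\<Sum>w\<in>L (Suc n). f w) = (\<Sum>w\<in>L n. f (w @ [False]) + f (w @ [True]))"
proof -
  have inj: "inj_on (\<lambda>(w,b). w @ [b]) (L n \<times> (UNIV::bool set))"
    by (auto simp: inj_on_def)
  have "(\<Sum>w\<in>L (Suc n). f w) = (\<Sum>p\<in>L n \<times> (UNIV::bool set). f (fst p @ [snd p]))"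
    unfolding L_Suc_eq by (subst sum.reindex[OF inj]) (auto intro!: sum.cong)
  also have "\<dots> = (\<Sum>w\<in>L n. \<Sum>b\<in>(UNIV::bool set). f (w @ [b]))"
    by (simp add: sum.cartesian_product split_def)
  also have "\<dots> = (\<Sum>w\<in>L n. f (w @ [False]) + f (w @ [True]))"
    by (simp add: UNIV_bool add.commute)
  finally show ?thesis .
qed

lemma strict_desc_iff: "v \<in> strict_desc u \<longleftrightarrow> (\<exists>w. w \<noteq> [] \<and> v = u @ w)"
  unfolding strict_desc_def by auto

lemma not_sd_len: "length v \<le> length u \<Longrightarrow> v \<notin> strict_desc u"
  unfolding strict_desc_iff by auto

lemma not_sd_child: "length v = length u \<Longrightarrow> v \<noteq> u \<Longrightarrow> v @ [b] \<notin> strict_desc u"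
  unfolding strict_desc_iff by (auto simp: append_eq_append_conv2 Cons_eq_append_conv)

lemma prob_fst: "measure_pmf.prob p {q. fst q} = pmf p (True,True) + pmf p (True,False)"
proof -
  have "{q::bool\<times>bool. fst q} = {(True,True),(True,False)}" by auto
  then show ?thesis by (simp add: measure_measure_pmf_finite)
qed

lemma prob_snd: "measure_pmf.prob p {q. snd q} = pmf p (True,True) + pmf p (False,True)"
proof -
  have "{q::bool\<times>bool. snd q} = {(True,True),(False,True)}" by auto
  then show ?thesis by (simp add: measure_measure_pmf_finite)
qed

lemma gamma_eq: "gamma nu j = measure_pmf.prob (nu True j) {q. fst q} + measure_pmf.prob (nu True j) {q. snd q}"
  unfolding gamma_def prob_fst prob_snd by (simp add: measure_measure_pmf_finite)

lemma gamma_nonneg: "gamma nu j \<ge> 0"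
  unfolding gamma_eq by simp

lemma gamma_le2: "gamma nu j \<le> 2"
  unfolding gamma_eq using measure_pmf.prob_le_1 by (smt (verit))

lemma eta_eq: "eta nu j = measure_pmf.prob (nu False j) (UNIV - {(False,False)})"
  unfolding eta_def using measure_pmf.prob_compl[of "{(False,False)}" "nu False j"] by (simp add: measure_pmf_single)

lemma eta_nonneg: "eta nu j \<ge> 0" unfolding eta_eq by simp
lemma eta_le1: "eta nu j \<le> 1" unfolding eta_eq by simp

lemma prob_fst_eta: "measure_pmf.prob (nu False j) {q. fst q} \<le> eta nu j"
  unfolding eta_eq by (rule measure_pmf.finite_measure_mono) auto
lemma prob_snd_eta: "measure_pmf.prob (nu False j) {q. snd q} \<le> eta nu j"
  unfolding eta_eq by (rule measure_pmf.finite_measure_mono) auto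
lemma prob_FF: "measure_pmf.prob (nu False j) {(False,False)} = 1 - eta nu j"
  unfolding eta_def by (simp add: measure_pmf_single)

locale bp =
  fixes M :: "'a measure" and nu :: "bool \<Rightarrow> nat \<Rightarrow> (bool \<times> bool) pmf"
    and X :: "bool list \<Rightarrow> 'a \<Rightarrow> bool"
  assumes bp: "branching_process M nu X"
begin

sublocale prob_space M using bp unfolding branching_process_def by auto

lemma measX: "{\<omega>\<in>space M. X v \<omega>} \<in> sets M"
proof -
  have "X v \<in> measurable M (count_space UNIV)" using bp unfolding branching_process_def by auto
  then have "X v -` {True} \<inter> space M \<in> sets M" by (rule measurable_sets) auto
  moreover have "X v -` {True} \<inter> space M = {\<omega>\<in>space M. X v \<omega>}" by auto
  ultimately show ?thesis by simp
qed

lemma event_M: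
  assumes "finite V"
    and "\<And>\<omega> \<omega>'. \<omega>\<in>space M \<Longrightarrow> \<omega>'\<in>space M \<Longrightarrow> (\<forall>v\<in>V. X v \<omega> = X v \<omega>') \<Longrightarrow> P \<omega> = P \<omega>'"
  shows "{\<omega>\<in>space M. P \<omega>} \<in> sets M"
  by (rule event_in[OF assms(1) refl measX assms(2)])

abbreviation "G u \<equiv> G_alg M X u"

lemma gen_sub: "{X v -` B \<inter> space M | v B. v \<notin> strict_desc u} \<subseteq> Pow (space M)" by auto

lemma space_G: "space (G u) = space M"
  unfolding G_alg_def by (simp add: space_measure_of_conv)

lemma sets_G: "sets (G u) = sigma_sets (space M) {X v -` B \<inter> space M | v B. v \<notin> strict_desc u}"
  unfolding G_alg_def by (rule sets_measure_of[OF gen_sub])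

lemma G_sub: "sets (G u) \<subseteq> sets M"
proof -
  have "{X v -` B \<inter> space M | v B. v \<notin> strict_desc u} \<subseteq> sets M"
  proof
    fix S assume "S \<in> {X v -` B \<inter> space M | v B. v \<notin> strict_desc u}"
    then obtain v B where S: "S = X v -` B \<inter> space M" by auto
    have "X v \<in> measurable M (count_space UNIV)" using bp unfolding branching_process_def by auto
    then show "S \<in> sets M" unfolding S by (rule measurable_sets) auto
  qed
  then show ?thesis unfolding sets_G by (rule sets.sigma_sets_subset)
qed

lemma measX_G: "v \<notin> strict_desc u \<Longrightarrow> {\<omega>\<in>space M. X v \<omega>} \<in> sets (G u)"
proof -
  assume v: "v \<notin> strict_desc u"
  have "X v -` {True} \<inter> space M \<in> {X v -` B \<inter> space M | v B. v \<notin> strict_desc u}" using v by blast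
  then have "X v -` {True} \<inter> space M \<in> sets (G u)" unfolding sets_G by (rule sigma_sets.Basic)
  moreover have "X v -` {True} \<inter> space M = {\<omega>\<in>space M. X v \<omega>}" by auto
  ultimately show ?thesis by simp
qed

lemma event_G:
  assumes "finite V" "\<And>v. v \<in> V \<Longrightarrow> v \<notin> strict_desc u"
    and "\<And>\<omega> \<omega>'. \<omega>\<in>space M \<Longrightarrow> \<omega>'\<in>space M \<Longrightarrow> (\<forall>v\<in>V. X v \<omega> = X v \<omega>') \<Longrightarrow> P \<omega> = P \<omega>'"
  shows "{\<omega>\<in>space M. P \<omega>} \<in> sets (G u)"
  by (rule event_in[OF assms(1) space_G measX_G[OF assms(2)] assms(3)])

lemma K:
  assumes E: "E \<in> sets (G u)" and Eb: "\<And>\<omega>. \<omega> \<in> E \<Longrightarrow> X u \<omega> = b"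
  shows "prob (E \<inter> {\<omega>\<in>space M. (X (u @ [False]) \<omega>, X (u @ [True]) \<omega>) \<in> A})
     = prob E * measure_pmf.prob (nu b (length u)) A"
proof -
  define C where "C = {\<omega>\<in>space M. (X (u @ [False]) \<omega>, X (u @ [True]) \<omega>) \<in> A}"
  have C: "C \<in> sets M" unfolding C_def by (rule event_M[of "{u @ [False], u @ [True]}"]) auto
  have EM: "E \<in> sets M" using E G_sub by auto
  interpret fs: finite_measure_subalgebra M "G u"
    by unfold_locales (auto simp: subalgebra_def space_G G_sub)
  have int: "integrable M (indicator C :: 'a \<Rightarrow> real)" using C by (simp add: integrable_indicator_iff less_top[symmetric])
  have ae: "AE \<omega> in M. real_cond_exp M (G u) (indicator C) \<omega> = measure_pmf.prob (nu (X u \<omega>) (length u)) A"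
    using bp unfolding branching_process_def C_def by auto
  have "prob (E \<inter> C) = (LINT \<omega>:E|M. indicator C \<omega>)"
    using EM C by (simp add: set_lebesgue_integral_def indicator_inter_arith[symmetric] mult.commute Int_commute)
  also have "\<dots> = (LINT \<omega>:E|M. real_cond_exp M (G u) (indicator C) \<omega>)"
    by (rule fs.real_cond_exp_intA[OF int E])
  also have "\<dots> = (LINT \<omega>:E|M. measure_pmf.prob (nu b (length u)) A)"
  proof (rule set_lebesgue_integral_cong_AE)
    show "E \<in> sets M" by (rule EM)
    show "real_cond_exp M (G u) (indicator C) \<in> borel_measurable M" by simp
    show "(\<lambda>_. measure_pmf.prob (nu b (length u)) A) \<in> borel_measurable M" by simp
    show "AE x\<in>E in M. real_cond_exp M (G u) (indicator C) x = measure_pmf.prob (nu b (length u)) A"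
      using ae by eventually_elim (use Eb in auto)
  qed
  also have "\<dots> = prob E * measure_pmf.prob (nu b (length u)) A"
    using EM by (simp add: set_integral_const)
  finally show ?thesis unfolding C_def .
qed

lemma Kc:
  assumes E: "E \<in> sets (G u)" and Eb: "\<And>\<omega>. \<omega> \<in> E \<Longrightarrow> X u \<omega> = b"
  shows "prob (E \<inter> {\<omega>\<in>space M. X (u @ [c]) \<omega>})
     = prob E * measure_pmf.prob (nu b (length u)) {q. if c then snd q else fst q}"
proof -
  have "{\<omega>\<in>space M. X (u @ [c]) \<omega>} = {\<omega>\<in>space M. (X (u @ [False]) \<omega>, X (u @ [True]) \<omega>) \<in> {q. if c then snd q else fst q}}"
    by (cases c) auto
  then show ?thesis using K[OF E Eb, of "{q. if c then snd q else fst q}"] by (simp only:)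
qed

definition Pth :: "bool list \<Rightarrow> bool list \<Rightarrow> 'a set" where
  "Pth u w = {\<omega>\<in>space M. \<forall>i\<le>length w. X (u @ take i w) \<omega>}"

lemma Pth_G: "Pth u w \<in> sets (G (u @ w))"
  unfolding Pth_def
  by (rule event_G[where V="(\<lambda>i. u @ take i w) ` {..length w}"]) (auto intro!: not_sd_len)

lemma Pth_M: "Pth u w \<in> sets M" using Pth_G G_sub by blast

lemma Pth_snoc: "Pth u (w @ [c]) = Pth u w \<inter> {\<omega>\<in>space M. X (u @ w @ [c]) \<omega>}"
proof -
  have "(\<forall>i\<le>length (w @ [c]). X (u @ take i (w @ [c])) \<omega>) \<longleftrightarrow>
        (\<forall>i\<le>length w. X (u @ take i w) \<omega>) \<and> X (u @ w @ [c]) \<omega>" for \<omega>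
  proof
    assume a: "\<forall>i\<le>length (w @ [c]). X (u @ take i (w @ [c])) \<omega>"
    show "(\<forall>i\<le>length w. X (u @ take i w) \<omega>) \<and> X (u @ w @ [c]) \<omega>"
    proof (intro conjI allI impI)
      fix i assume "i \<le> length w" then show "X (u @ take i w) \<omega>" using a[rule_format, of i] by simp
    next
      show "X (u @ w @ [c]) \<omega>" using a[rule_format, of "Suc (length w)"] by simp
    qed
  next
    assume a: "(\<forall>i\<le>length w. X (u @ take i w) \<omega>) \<and> X (u @ w @ [c]) \<omega>"
    show "\<forall>i\<le>length (w @ [c]). X (u @ take i (w @ [c])) \<omega>"
    proof (intro allI impI)
      fix i assume "i \<le> length (w @ [c])"
      then consider "i \<le> length w" | "i = Suc (length w)" by fastforce
      then show "X (u @ take i (w @ [c])) \<omega>" using a by cases auto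
    qed
  qed
  then show ?thesis unfolding Pth_def by auto
qed

lemma Pth_last: "\<omega> \<in> Pth u w \<Longrightarrow> X (u @ w) \<omega>"
  unfolding Pth_def by auto

lemma prob_Pth_snoc: "prob (Pth u (w @ [c])) = prob (Pth u w) *
    measure_pmf.prob (nu True (length u + length w)) {q. if c then snd q else fst q}"
  using Kc[OF Pth_G, of u w True c] Pth_last unfolding Pth_snoc by simp

lemma a_Suc: "(\<Sum>w\<in>L (Suc n). prob (Pth u w)) = gamma nu (length u + n) * (\<Sum>w\<in>L n. prob (Pth u w))"
  unfolding sum_L_Suc prob_Pth_snoc gamma_eq
  by (simp add: sum_distrib_left L_def algebra_simps sum.distrib)

lemma a_le: "(\<Sum>w\<in>L n. prob (Pth u w)) \<le> (\<Prod>i<n. gamma nu (length u + i))"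
proof (induction n)
  case 0
  have "L 0 = {[]}" unfolding L_def by auto
  then show ?case by simp
next
  case (Suc n)
  then show ?case unfolding a_Suc using gamma_nonneg
    by (simp add: mult_left_mono mult.commute)
qed

definition ZS :: "bool list \<Rightarrow> nat \<Rightarrow> bool list set \<Rightarrow> 'a set" where
  "ZS v k S = {\<omega>\<in>space M. (\<forall>w'. length w' \<le> k \<longrightarrow> \<not> X (v @ w') \<omega>) \<and>
      (\<forall>w\<in>S. \<not> X (v @ w @ [False]) \<omega> \<and> \<not> X (v @ w @ [True]) \<omega>)}"

lemma finite_len_le: "finite {w'::bool list. length w' \<le> k}"
  using finite_lists_length_le[of "UNIV::bool set" k] by simp

definition VS :: "bool list \<Rightarrow> nat \<Rightarrow> bool list set \<Rightarrow> bool list set" where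
  "VS v k S = (\<lambda>w'. v @ w') ` {w'. length w' \<le> k} \<union> (\<lambda>(w'',b). v @ w'' @ [b]) ` (S \<times> UNIV)"

lemma VS_fin: "finite S \<Longrightarrow> finite (VS v k S)"
  unfolding VS_def using finite_len_le by auto

lemma ZS_dep:
  assumes "\<forall>x\<in>VS v k S. X x \<omega> = X x \<omega>'"
  shows "((\<forall>w'. length w' \<le> k \<longrightarrow> \<not> X (v @ w') \<omega>) \<and> (\<forall>w\<in>S. \<not> X (v @ w @ [False]) \<omega> \<and> \<not> X (v @ w @ [True]) \<omega>)) =
        ((\<forall>w'. length w' \<le> k \<longrightarrow> \<not> X (v @ w') \<omega>') \<and> (\<forall>w\<in>S. \<not> X (v @ w @ [False]) \<omega>' \<and> \<not> X (v @ w @ [True]) \<omega>'))"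
proof -
  have a: "X (v @ w') \<omega> = X (v @ w') \<omega>'" if "length w' \<le> k" for w'
  proof -
    have "v @ w' \<in> VS v k S" unfolding VS_def using that by auto
    then show ?thesis using assms by blast
  qed
  have b: "X (v @ w'' @ [b]) \<omega> = X (v @ w'' @ [b]) \<omega>'" if "w'' \<in> S" for w'' b
  proof -
    have "v @ w'' @ [b] \<in> VS v k S" unfolding VS_def using that by (intro UnI2 image_eqI[where x="(w'',b)"]) auto
    then show ?thesis using assms by blast
  qed
  have c1: "(\<forall>w'. length w' \<le> k \<longrightarrow> \<not> X (v @ w') \<omega>) = (\<forall>w'. length w' \<le> k \<longrightarrow> \<not> X (v @ w') \<omega>')"
    using a by auto
  have c2: "(\<forall>w\<in>S. \<not> X (v @ w @ [False]) \<omega> \<and> \<not> X (v @ w @ [True]) \<omega>) = (\<forall>w\<in>S. \<not> X (v @ w @ [False]) \<omega>' \<and> \<not> X (v @ w @ [True]) \<omega>')"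
    using b by auto
  show ?thesis using c1 c2 by simp
qed

lemma ZS_G:
  assumes S: "finite S" "S \<subseteq> L k" and w: "w \<in> L k" "w \<notin> S"
  shows "ZS v k S \<in> sets (G (v @ w))"
  unfolding ZS_def
proof (rule event_G[where V="VS v k S"])
  show "finite (VS v k S)" using VS_fin S by auto
next
  fix x assume "x \<in> VS v k S"
  then consider w' where "x = v @ w'" "length w' \<le> k" | w'' b where "x = v @ w'' @ [b]" "w'' \<in> S"
    unfolding VS_def by auto
  then show "x \<notin> strict_desc (v @ w)"
  proof cases
    case 1 then show ?thesis using w by (intro not_sd_len) (auto simp: L_def)
  next
    case 2
    then have "v @ w'' \<noteq> v @ w" "length (v @ w'') = length (v @ w)" using w S by (auto simp: L_def)
    then have "(v @ w'') @ [b] \<notin> strict_desc (v @ w)" using not_sd_child[of "v @ w''" "v @ w" b] by blast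
    then show ?thesis using 2 by simp
  qed
next
  fix \<omega> \<omega>' assume "\<forall>x\<in>VS v k S. X x \<omega> = X x \<omega>'"
  then show "((\<forall>w'. length w' \<le> k \<longrightarrow> \<not> X (v @ w') \<omega>) \<and> (\<forall>w\<in>S. \<not> X (v @ w @ [False]) \<omega> \<and> \<not> X (v @ w @ [True]) \<omega>)) =
        ((\<forall>w'. length w' \<le> k \<longrightarrow> \<not> X (v @ w') \<omega>') \<and> (\<forall>w\<in>S. \<not> X (v @ w @ [False]) \<omega>' \<and> \<not> X (v @ w @ [True]) \<omega>'))"
    by (rule ZS_dep)
qed

lemma ZS_M: "finite S \<Longrightarrow> ZS v k S \<in> sets M"
  unfolding ZS_def
  apply (rule event_M[where V="VS v k S"])
   apply (simp add: VS_fin)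
  apply (rule ZS_dep)
  apply assumption
  done

lemma prob_ZS:
  assumes "finite S" "S \<subseteq> L k"
  shows "prob (ZS v k S) = prob (ZS v k {}) * (1 - eta nu (length v + k)) ^ card S"
  using assms
proof (induction S rule: finite_induct)
  case empty then show ?case by simp
next
  case (insert w S)
  have w: "w \<in> L k" "w \<notin> S" "S \<subseteq> L k" using insert by auto
  have eq: "ZS v k (insert w S) = ZS v k S \<inter> {\<omega>\<in>space M. (X ((v @ w) @ [False]) \<omega>, X ((v @ w) @ [True]) \<omega>) \<in> {(False,False)}}"
    unfolding ZS_def by auto
  have Eb: "X (v @ w) \<omega> = False" if "\<omega> \<in> ZS v k S" for \<omega>
    using that w unfolding ZS_def L_def by auto
  have "prob (ZS v k (insert w S)) = prob (ZS v k S) * measure_pmf.prob (nu False (length (v @ w))) {(False,False)}"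
    unfolding eq by (rule K[OF ZS_G[OF insert(1) w(3) w(1,2)] Eb])
  then have "prob (ZS v k (insert w S)) = prob (ZS v k S) * (1 - eta nu (length v + k))"
    unfolding prob_FF using w by (simp add: L_def)
  then show ?case using insert by simp
qed

definition Zk :: "bool list \<Rightarrow> nat \<Rightarrow> 'a set" where
  "Zk v k = {\<omega>\<in>space M. \<forall>w'. length w' \<le> k \<longrightarrow> \<not> X (v @ w') \<omega>}"

lemma Zk_ZS: "Zk v k = ZS v k {}" unfolding Zk_def ZS_def by auto

lemma Zk_Suc: "Zk v (Suc k) = ZS v k (L k)"
proof -
  have "(\<forall>w'. length w' \<le> Suc k \<longrightarrow> \<not> X (v @ w') \<omega>) \<longleftrightarrow>
    (\<forall>w'. length w' \<le> k \<longrightarrow> \<not> X (v @ w') \<omega>) \<and> (\<forall>w\<in>L k. \<not> X (v @ w @ [False]) \<omega> \<and> \<not> X (v @ w @ [True]) \<omega>)" for \<omega>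
  proof
    assume a: "\<forall>w'. length w' \<le> Suc k \<longrightarrow> \<not> X (v @ w') \<omega>"
    then show "(\<forall>w'. length w' \<le> k \<longrightarrow> \<not> X (v @ w') \<omega>) \<and> (\<forall>w\<in>L k. \<not> X (v @ w @ [False]) \<omega> \<and> \<not> X (v @ w @ [True]) \<omega>)"
    proof (intro conjI allI impI ballI)
      fix w' :: "bool list" assume "length w' \<le> k" then show "\<not> X (v @ w') \<omega>" using a by auto
    next
      fix w assume "w \<in> L k"
      then have "length (w @ [False]) \<le> Suc k" "length (w @ [True]) \<le> Suc k" unfolding L_def by auto
      then show "\<not> X (v @ w @ [False]) \<omega>" "\<not> X (v @ w @ [True]) \<omega>" using a by (metis append_assoc)+
    qed
  next
    assume a: "(\<forall>w'. length w' \<le> k \<longrightarrow> \<not> X (v @ w') \<omega>) \<and> (\<forall>w\<in>L k. \<not> X (v @ w @ [False]) \<omega> \<and> \<not> X (v @ w @ [True]) \<omega>)"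
    show "\<forall>w'. length w' \<le> Suc k \<longrightarrow> \<not> X (v @ w') \<omega>"
    proof (intro allI impI)
      fix w' :: "bool list" assume l: "length w' \<le> Suc k"
      show "\<not> X (v @ w') \<omega>"
      proof (cases "length w' \<le> k")
        case True then show ?thesis using a by auto
      next
        case False
        then have "w' \<noteq> []" "length w' = Suc k" using l by auto
        then have "w' = butlast w' @ [last w']" "butlast w' \<in> L k" unfolding L_def by auto
        then show ?thesis using a by (metis (full_types) append_assoc)
      qed
    qed
  qed
  then show ?thesis unfolding Zk_def ZS_def by auto
qed

lemma prob_Zk_le: "prob (Zk v k) \<le> (\<Prod>i<k. (1 - eta nu (length v + i)) ^ (2 ^ i))"
proof (induction k)
  case 0 then show ?case by simp
next
  case (Suc k)
  have "prob (Zk v (Suc k)) = prob (Zk v k) * (1 - eta nu (length v + k)) ^ (2 ^ k)"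
    unfolding Zk_Suc prob_ZS[OF finite_L subset_refl] card_L by (simp add: Zk_ZS)
  also have "\<dots> \<le> (\<Prod>i<k. (1 - eta nu (length v + i)) ^ (2 ^ i)) * (1 - eta nu (length v + k)) ^ (2 ^ k)"
    using Suc eta_le1 by (intro mult_right_mono) auto
  finally show ?case by simp
qed

lemma card_indicator: "finite V \<Longrightarrow> real (card {v\<in>V. \<omega> \<in> E v}) = (\<Sum>v\<in>V. indicator (E v) \<omega>)"
  by (simp add: indicator_def sum.inter_filter[symmetric] Int_def)

lemma count_markov:
  assumes V: "finite V" and E: "\<And>v. v \<in> V \<Longrightarrow> E v \<in> sets M" and c: "c > 0"
  shows "prob {\<omega>\<in>space M. c \<le> real (card {v\<in>V. \<omega> \<in> E v})} \<le> (\<Sum>v\<in>V. prob (E v)) / c"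
proof -
  define f where "f = (\<lambda>\<omega>. \<Sum>v\<in>V. indicator (E v) \<omega> :: real)"
  have int: "integrable M f" unfolding f_def
    using E by (auto simp: integrable_indicator_iff less_top[symmetric])
  have intf: "(\<integral>\<omega>. f \<omega> \<partial>M) = (\<Sum>v\<in>V. prob (E v))" unfolding f_def
    using Bochner_Integration.integral_sum[where I=V and M=M and f="\<lambda>v. indicator (E v) :: 'a \<Rightarrow> real"] E
    by (auto simp: integrable_indicator_iff less_top[symmetric])
  have "prob {\<omega>\<in>space M. c \<le> f \<omega>} \<le> (\<integral>\<omega>. f \<omega> \<partial>M) / c"
    by (rule integral_Markov_inequality_measure[OF int sets.top]) (auto simp: f_def c sum_nonneg)
  moreover have "{\<omega>\<in>space M. c \<le> real (card {v\<in>V. \<omega> \<in> E v})} = {\<omega>\<in>space M. c \<le> f \<omega>}"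
    unfolding f_def by (simp only: card_indicator[OF V])
  ultimately show ?thesis using intf by simp
qed

definition SE :: "nat \<Rightarrow> real" where "SE j = (\<Sum>v\<in>L j. prob {\<omega>\<in>space M. X v \<omega>})"

definition Ev :: "bool list \<Rightarrow> 'a set" where
  "Ev v = {\<omega>\<in>space M. v \<noteq> [] \<and> X v \<omega> \<and> \<not> X (butlast v) \<omega>}"

definition TE :: "nat \<Rightarrow> real" where "TE j = (\<Sum>v\<in>L j. prob (Ev v))"

lemma Ev_M: "Ev v \<in> sets M"
  unfolding Ev_def by (rule event_M[where V="{v, butlast v}"]) auto

lemma notX_G: "{\<omega>\<in>space M. \<not> X w \<omega>} \<in> sets (G w)"
  by (rule event_G[where V="{w}"]) (auto simp: strict_desc_iff)

lemma X_G: "{\<omega>\<in>space M. X w \<omega>} \<in> sets (G w)"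
  by (rule event_G[where V="{w}"]) (auto simp: strict_desc_iff)

lemma prob_c_eta: "measure_pmf.prob (nu False j) {q. if c then snd q else fst q} \<le> eta nu j"
  by (cases c) (simp_all add: prob_fst_eta prob_snd_eta)

lemma prob_Ev: "prob (Ev (w @ [c])) \<le> eta nu (length w)"
proof -
  have "Ev (w @ [c]) = {\<omega>\<in>space M. \<not> X w \<omega>} \<inter> {\<omega>\<in>space M. X (w @ [c]) \<omega>}"
    unfolding Ev_def by auto
  then have "prob (Ev (w @ [c])) = prob {\<omega>\<in>space M. \<not> X w \<omega>} * measure_pmf.prob (nu False (length w)) {q. if c then snd q else fst q}"
    using Kc[OF notX_G, of w False c] by simp
  also have "\<dots> \<le> 1 * eta nu (length w)"
    using prob_c_eta by (intro mult_mono) auto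
  finally show ?thesis by simp
qed

lemma TE_Suc: "TE (Suc n) \<le> 2 ^ Suc n * eta nu n"
proof -
  have "TE (Suc n) = (\<Sum>w\<in>L n. prob (Ev (w @ [False])) + prob (Ev (w @ [True])))"
    unfolding TE_def sum_L_Suc ..
  also have "\<dots> \<le> (\<Sum>w\<in>L n. 2 * eta nu n)"
  proof (rule sum_mono)
    fix w assume "w \<in> L n"
    then show "prob (Ev (w @ [False])) + prob (Ev (w @ [True])) \<le> 2 * eta nu n"
      using prob_Ev[of w False] prob_Ev[of w True] by (simp add: L_def)
  qed
  also have "\<dots> = 2 ^ Suc n * eta nu n" by (simp add: card_L)
  finally show ?thesis .
qed

lemma prob_X_child: "prob {\<omega>\<in>space M. X (w @ [c]) \<omega>} \<le>
    prob {\<omega>\<in>space M. X w \<omega>} * measure_pmf.prob (nu True (length w)) {q. if c then snd q else fst q} + eta nu (length w)"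
proof -
  have split: "{\<omega>\<in>space M. X (w @ [c]) \<omega>} \<subseteq> ({\<omega>\<in>space M. X w \<omega>} \<inter> {\<omega>\<in>space M. X (w @ [c]) \<omega>}) \<union> Ev (w @ [c])"
    unfolding Ev_def by auto
  have "prob {\<omega>\<in>space M. X (w @ [c]) \<omega>} \<le> prob (({\<omega>\<in>space M. X w \<omega>} \<inter> {\<omega>\<in>space M. X (w @ [c]) \<omega>}) \<union> Ev (w @ [c]))"
    by (rule finite_measure_mono[OF split sets.Un[OF sets.Int[OF measX measX] Ev_M]])
  also have "\<dots> \<le> prob ({\<omega>\<in>space M. X w \<omega>} \<inter> {\<omega>\<in>space M. X (w @ [c]) \<omega>}) + prob (Ev (w @ [c]))"
    by (rule measure_subadditive[OF sets.Int[OF measX measX] Ev_M]) simp_all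
  also have "\<dots> \<le> prob {\<omega>\<in>space M. X w \<omega>} * measure_pmf.prob (nu True (length w)) {q. if c then snd q else fst q} + eta nu (length w)"
    using Kc[OF X_G, of w True c] prob_Ev[of w c] by simp
  finally show ?thesis .
qed

lemma SE_Suc: "SE (Suc n) \<le> gamma nu n * SE n + 2 ^ Suc n * eta nu n"
proof -
  have "SE (Suc n) = (\<Sum>w\<in>L n. prob {\<omega>\<in>space M. X (w @ [False]) \<omega>} + prob {\<omega>\<in>space M. X (w @ [True]) \<omega>})"
    unfolding SE_def sum_L_Suc ..
  also have "\<dots> \<le> (\<Sum>w\<in>L n. gamma nu n * prob {\<omega>\<in>space M. X w \<omega>} + 2 * eta nu n)"
  proof (rule sum_mono)
    fix w assume w: "w \<in> L n"
    show "prob {\<omega>\<in>space M. X (w @ [False]) \<omega>} + prob {\<omega>\<in>space M. X (w @ [True]) \<omega>}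
      \<le> gamma nu n * prob {\<omega>\<in>space M. X w \<omega>} + 2 * eta nu n"
    proof -
      have n: "length w = n" using w by (simp add: L_def)
      have 1: "prob {\<omega>\<in>space M. X (w @ [False]) \<omega>} \<le> prob {\<omega>\<in>space M. X w \<omega>} * measure_pmf.prob (nu True n) {q. fst q} + eta nu n"
        using prob_X_child[of w False] n by simp
      have 2: "prob {\<omega>\<in>space M. X (w @ [True]) \<omega>} \<le> prob {\<omega>\<in>space M. X w \<omega>} * measure_pmf.prob (nu True n) {q. snd q} + eta nu n"
        using prob_X_child[of w True] n by simp
      have 3: "gamma nu n * prob {\<omega>\<in>space M. X w \<omega>} = prob {\<omega>\<in>space M. X w \<omega>} * measure_pmf.prob (nu True n) {q. fst q}
          + prob {\<omega>\<in>space M. X w \<omega>} * measure_pmf.prob (nu True n) {q. snd q}"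
        unfolding gamma_eq by (simp only: distrib_left mult.commute)
      show ?thesis using 1 2 3 by linarith
    qed
  qed
  also have "\<dots> = gamma nu n * SE n + 2 ^ Suc n * eta nu n"
    by (simp add: SE_def sum.distrib sum_distrib_left card_L)
  finally show ?thesis .
qed

lemma SE_nonneg: "SE j \<ge> 0" unfolding SE_def by (simp add: sum_nonneg)

end



lemma not_summable_eta:
  assumes div: "(\<Sum>j. ennreal (2 ^ j * eta nu j)) = \<top>"
  shows "\<not> summable (\<lambda>i. 2 ^ i * eta nu (d + i) :: real)"
proof
  assume s: "summable (\<lambda>i. 2 ^ i * eta nu (d + i) :: real)"
  then have "summable (\<lambda>i. 2 ^ d * (2 ^ i * eta nu (d + i)) :: real)" by (rule summable_mult)
  then have "summable (\<lambda>i. 2 ^ (i + d) * eta nu (i + d) :: real)"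
    by (simp add: power_add mult_ac add.commute)
  then have "summable (\<lambda>j. 2 ^ j * eta nu j :: real)"
    by (rule summable_iff_shift[THEN iffD1])
  then have "(\<Sum>j. ennreal (2 ^ j * eta nu j)) = ennreal (\<Sum>j. 2 ^ j * eta nu j)"
    by (intro suminf_ennreal2) (auto simp: eta_nonneg)
  then show False using div by simp
qed

lemma zero_tree_small:
  assumes div: "(\<Sum>j. ennreal (2 ^ j * eta nu j)) = \<top>" and e: "\<epsilon> > 0"
  shows "\<exists>k. (\<Prod>i<k. (1 - eta nu (d + i)) ^ (2 ^ i)) \<le> \<epsilon>"
proof (cases "\<epsilon> \<ge> 1")
  case True then show ?thesis by (intro exI[of _ 0]) simp
next
  case False
  define a where "a i = 2 ^ i * eta nu (d + i)" for i
  have a0: "0 \<le> a i" for i unfolding a_def by (simp add: eta_nonneg)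
  have "\<not> (\<forall>n. (\<Sum>i<n. a i) \<le> - ln \<epsilon>)"
  proof
    assume "\<forall>n. (\<Sum>i<n. a i) \<le> - ln \<epsilon>"
    then have "summable a" by (intro summableI_nonneg_bounded[OF a0]) auto
    then show False using not_summable_eta[OF div, of d] unfolding a_def by simp
  qed
  then obtain k where k: "(\<Sum>i<k. a i) > - ln \<epsilon>" by (auto simp: not_le)
  have "(\<Prod>i<k. (1 - eta nu (d + i)) ^ (2 ^ i)) \<le> (\<Prod>i<k. exp (- eta nu (d + i)) ^ (2 ^ i))"
  proof (rule prod_mono)
    fix i assume "i \<in> {..<k}"
    have "0 \<le> 1 - eta nu (d + i)" using eta_le1 by simp
    moreover have "1 - eta nu (d + i) \<le> exp (- eta nu (d + i))"
      using exp_ge_add_one_self[of "- eta nu (d + i)"] by simp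
    ultimately show "0 \<le> (1 - eta nu (d + i)) ^ 2 ^ i \<and> (1 - eta nu (d + i)) ^ 2 ^ i \<le> exp (- eta nu (d + i)) ^ 2 ^ i"
      by (auto intro: power_mono)
  qed
  also have "\<dots> = (\<Prod>i<k. exp (- a i))"
    unfolding a_def by (intro prod.cong refl) (simp add: exp_of_nat_mult[symmetric])
  also have "\<dots> = exp (- (\<Sum>i<k. a i))"
    by (simp add: exp_sum[symmetric] sum_negf)
  also have "\<dots> \<le> exp (ln \<epsilon>)" using k by simp
  also have "\<dots> = \<epsilon>" using e by simp
  finally show ?thesis by blast
qed

lemma prod_gamma_split:
  assumes pos: "\<And>j. j \<ge> J \<Longrightarrow> gamma nu j > 0" and n: "n \<ge> J" "n \<ge> d"
  shows "(\<Prod>l\<in>{d..n}. gamma nu l) \<le> (2 ^ J + 1 / (\<Prod>l\<in>{J..<d}. gamma nu l)) * (\<Prod>l\<in>{J..n}. gamma nu l)"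
proof -
  define C where "C = 2 ^ J + 1 / (\<Prod>l\<in>{J..<d}. gamma nu l)"
  have P0pos: "(\<Prod>l\<in>{J..<d}. gamma nu l) > 0" using pos by (intro prod_pos) auto
  have Qnn: "(\<Prod>l\<in>{J..n}. gamma nu l) \<ge> 0" using gamma_nonneg by (intro prod_nonneg) auto
  show ?thesis
  proof (cases "d \<le> J")
    case True
    have "{d..n} = {d..<J} \<union> {J..n}" using True n by auto
    then have "(\<Prod>l\<in>{d..n}. gamma nu l) = (\<Prod>l\<in>{d..<J}. gamma nu l) * (\<Prod>l\<in>{J..n}. gamma nu l)"
      by (simp add: prod.union_disjoint[symmetric] ivl_disj_int)
    also have "(\<Prod>l\<in>{d..<J}. gamma nu l) \<le> (\<Prod>l\<in>{d..<J}. 2)"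
      using gamma_nonneg gamma_le2 by (intro prod_mono) auto
    also have "(\<Prod>l\<in>{d..<J}. (2::real)) = 2 ^ (J - d)" by simp
    also have "\<dots> \<le> 2 ^ J" by (intro power_increasing) auto
    also have "\<dots> \<le> C" unfolding C_def using P0pos by simp
    finally show ?thesis unfolding C_def[symmetric] using Qnn by (simp add: mult_right_mono)
  next
    case False
    have "{J..n} = {J..<d} \<union> {d..n}" using False n by auto
    then have Q: "(\<Prod>l\<in>{J..n}. gamma nu l) = (\<Prod>l\<in>{J..<d}. gamma nu l) * (\<Prod>l\<in>{d..n}. gamma nu l)"
      by (simp add: prod.union_disjoint[symmetric] ivl_disj_int)
    have gen: "\<And>a b::real. a \<noteq> 0 \<Longrightarrow> b = (1/a)*(a*b)" by simp
    have "(\<Prod>l\<in>{J..<d}. gamma nu l) \<noteq> 0" using P0pos by linarith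
    then have "(\<Prod>l\<in>{d..n}. gamma nu l) = (1 / (\<Prod>l\<in>{J..<d}. gamma nu l)) * (\<Prod>l\<in>{J..n}. gamma nu l)"
      unfolding Q by (rule gen)
    also have "\<dots> \<le> C * (\<Prod>l\<in>{J..n}. gamma nu l)" unfolding C_def using Qnn by (intro mult_right_mono) auto
    finally show ?thesis unfolding C_def .
  qed
qed

lemma prod_shift_d: "(\<Prod>i<Suc n - d. f (d + i)) = (\<Prod>l\<in>{d..n}. f l)" if "d \<le> n" for f :: "nat \<Rightarrow> real"
proof -
  have "(\<Prod>l\<in>{d..<(Suc n - d) + d}. f l) = (\<Prod>i\<in>{0..<Suc n - d}. f (i + d))"
    using prod.shift_bounds_nat_ivl[of f 0 d "Suc n - d"] by simp
  moreover have "(Suc n - d) + d = Suc n" using that by simp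
  ultimately show ?thesis by (simp add: atLeast0LessThan atLeastLessThanSuc_atLeastAtMost add.commute)
qed

lemma gamma_small:
  assumes th: "theta nu < ereal c" and e: "\<epsilon> > 0"
  shows "\<exists>n. (\<Prod>i<n. gamma nu (d + i)) \<le> \<epsilon> * 2 powr (c * real n)"
proof (cases "\<exists>j0. \<forall>j\<ge>j0. gamma nu j > 0")
  case False
  then obtain j where j: "j \<ge> d" "\<not> gamma nu j > 0" by auto
  then have g0: "gamma nu j = 0" using gamma_nonneg[of nu j] by simp
  have "(\<Prod>i<Suc (j - d). gamma nu (d + i)) = 0"
    by (rule prod_zero) (use j g0 in \<open>auto intro!: bexI[of _ "j - d"]\<close>)
  moreover have "0 \<le> \<epsilon> * 2 powr (c * real (Suc (j - d)))" using e by simp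
  ultimately show ?thesis by metis
next
  case True
  define J where "J = (LEAST j0. \<forall>j\<ge>j0. gamma nu j > 0)"
  have pos: "\<And>j. j \<ge> J \<Longrightarrow> gamma nu j > 0" unfolding J_def using LeastI_ex[OF True] by blast
  define f where "f j = ereal ((\<Sum>l\<in>{J..j}. ln (gamma nu l)) / (real j * ln 2))" for j
  have jl: "jlow nu = enat J" unfolding jlow_def J_def using True by simp
  have thf: "theta nu = liminf f" unfolding theta_def jl f_def by simp
  have "\<not> ereal c \<le> liminf f" using th thf by simp
  then obtain y where y: "y < ereal c" "\<not> eventually (\<lambda>x. y < f x) sequentially"
    unfolding le_Liminf_iff by auto
  have "y \<noteq> -\<infinity>" using y(2) unfolding f_def by auto
  with y(1) obtain c' where c': "y = ereal c'" "c' < c" by (cases y) auto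
  have freq: "\<forall>N. \<exists>n\<ge>N. f n \<le> ereal c'" using y(2) c'(1) unfolding eventually_sequentially by (auto simp: not_less)
  define C where "C = 2 ^ J + 1 / (\<Prod>l\<in>{J..<d}. gamma nu l)"
  have P0pos: "(\<Prod>l\<in>{J..<d}. gamma nu l) > 0" using pos by (intro prod_pos) auto
  have Cpos: "C > 0" unfolding C_def using P0pos by (simp add: add_pos_nonneg)
  define r where "r = 2 powr (c' - c)"
  have r: "0 < r" "r < 1" unfolding r_def using c' powr_less_mono[of "c' - c" 0 2] by auto
  define e' where "e' = \<epsilon> * 2 powr (c * (1 - real d)) / C"
  have e': "e' > 0" unfolding e'_def using e Cpos by simp
  have "(\<lambda>n. r ^ n) \<longlonglongrightarrow> 0" using r by (intro LIMSEQ_realpow_zero) auto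
  then have "eventually (\<lambda>n. r ^ n < e') sequentially" using e' by (rule order_tendstoD(2))
  then obtain N1 where N1: "\<And>n. n \<ge> N1 \<Longrightarrow> r ^ n < e'" unfolding eventually_sequentially by auto
  obtain n where n: "n \<ge> max N1 (max J (max d 1))" "f n \<le> ereal c'" using freq by blast
  have nJ: "n \<ge> J" and nd: "n \<ge> d" and n1: "n \<ge> 1" and nN: "n \<ge> N1" using n(1) by auto
  have "(\<Sum>l\<in>{J..n}. ln (gamma nu l)) / (real n * ln 2) \<le> c'" using n(2) unfolding f_def by simp
  then have S: "(\<Sum>l\<in>{J..n}. ln (gamma nu l)) \<le> c' * (real n * ln 2)"
    using n1 by (simp add: pos_divide_le_eq)
  have "(\<Prod>l\<in>{J..n}. gamma nu l) = exp (\<Sum>l\<in>{J..n}. ln (gamma nu l))"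
    by (simp add: exp_sum pos)
  also have "\<dots> \<le> exp (c' * (real n * ln 2))" using S by simp
  also have "\<dots> = 2 powr (c' * real n)" by (simp add: powr_def mult_ac)
  finally have Q: "(\<Prod>l\<in>{J..n}. gamma nu l) \<le> 2 powr (c' * real n)" .
  have "(\<Prod>i<Suc n - d. gamma nu (d + i)) = (\<Prod>l\<in>{d..n}. gamma nu l)" using nd by (rule prod_shift_d)
  also have "\<dots> \<le> C * (\<Prod>l\<in>{J..n}. gamma nu l)" unfolding C_def by (rule prod_gamma_split[OF pos nJ nd])
  also have "\<dots> \<le> C * 2 powr (c' * real n)" using Q Cpos by simp
  also have "\<dots> = C * r ^ n * 2 powr (c * real n)"
  proof -
    have "r ^ n = 2 powr ((c' - c) * real n)" unfolding r_def by (simp add: powr_realpow[symmetric] powr_powr)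
    then show ?thesis by (simp add: powr_add[symmetric] algebra_simps)
  qed
  also have "\<dots> \<le> C * e' * 2 powr (c * real n)" using N1[OF nN] Cpos by simp
  also have "\<dots> = \<epsilon> * 2 powr (c * real (Suc n - d))"
  proof -
    have "real (Suc n - d) = real n + (1 - real d)" using nd by simp
    then show ?thesis unfolding e'_def using Cpos by (simp add: powr_add distrib_left mult_ac)
  qed
  finally show ?thesis by blast
qed

lemma kappa_exists:
  fixes a T :: "nat \<Rightarrow> real"
  assumes T0: "\<And>j. 0 \<le> T j" and Tz: "\<And>j. T j = 0 \<Longrightarrow> a j \<le> 0" and ev: "\<And>j. j \<ge> N \<Longrightarrow> a j \<le> T j"
  shows "\<exists>\<kappa>\<ge>1. \<forall>j. a j \<le> \<kappa> * T j"
proof -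
  define \<kappa> where "\<kappa> = max 1 (\<Sum>j<N. \<bar>a j\<bar> / T j)"
  have k1: "\<kappa> \<ge> 1" unfolding \<kappa>_def by simp
  have "a j \<le> \<kappa> * T j" for j
  proof (cases "j \<ge> N")
    case True
    then have "a j \<le> T j" by (rule ev)
    also have "\<dots> \<le> \<kappa> * T j" using k1 T0[of j] by (simp add: mult_le_cancel_right1)
    finally show ?thesis .
  next
    case False
    show ?thesis
    proof (cases "T j = 0")
      case True then show ?thesis using Tz by simp
    next
      case Tp: False
      then have Tp: "T j > 0" using T0[of j] by simp
      have "\<bar>a j\<bar> / T j \<le> (\<Sum>j<N. \<bar>a j\<bar> / T j)"
        using False T0 by (intro member_le_sum) auto
      also have "\<dots> \<le> \<kappa>" unfolding \<kappa>_def by simp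
      finally have "\<bar>a j\<bar> \<le> \<kappa> * T j" using Tp by (simp add: divide_le_eq)
      then show ?thesis by simp
    qed
  qed
  then show ?thesis using k1 by blast
qed

lemma summable_inv_sq: "summable (\<lambda>j. 1 / (real (Suc j))^2)"
proof -
  have "summable (\<lambda>n. inverse (real n ^ 2))" by (rule inverse_power_summable) simp
  then have "summable (\<lambda>n. inverse (real (n + 1) ^ 2))" by (subst summable_iff_shift) simp
  then show ?thesis by (simp add: divide_inverse)
qed

lemma recur_bound:
  fixes r :: "nat \<Rightarrow> real"
  assumes x: "x > 1" and step: "\<And>k. k \<ge> K \<Longrightarrow> r (Suc k) \<le> r k + 2 * x ^ k"
  shows "k \<ge> K \<Longrightarrow> r k \<le> r K + (2 / (x - 1)) * x ^ k"
proof -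
  define B where "B = 2 / (x - 1)"
  have B: "B * x = B + 2" unfolding B_def using x by (simp add: field_simps)
  have Bp: "B \<ge> 0" unfolding B_def using x by simp
  have "r (K + m) \<le> r K + B * x ^ (K + m)" for m
  proof (induction m)
    case 0 then show ?case using Bp x by simp
  next
    case (Suc m)
    have "r (K + Suc m) \<le> r (K + m) + 2 * x ^ (K + m)" using step[of "K + m"] by simp
    also have "\<dots> \<le> r K + B * x ^ (K + m) + 2 * x ^ (K + m)" using Suc by simp
    also have "\<dots> = r K + (B * x) * x ^ (K + m)" unfolding B by (simp add: algebra_simps)
    also have "\<dots> = r K + B * x ^ (K + Suc m)" by (simp add: mult_ac)
    finally show ?case .
  qed
  then show "k \<ge> K \<Longrightarrow> r k \<le> r K + (2 / (x - 1)) * x ^ k" unfolding B_def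
    by (metis le_add_diff_inverse)
qed

lemma eta_growth:
  assumes ht: "htilde nu hl = \<infinity>" and hl: "hl > 0" and d: "\<delta> > 0"
  shows "eventually (\<lambda>k. 2 ^ k * eta nu k \<le> (2 powr \<delta>) ^ k) sequentially"
proof -
  define h where "h = hl / \<delta>"
  have h: "h > 0" unfolding h_def using hl d by simp
  have hh: "1 - hl / h = 1 - \<delta>" unfolding h_def using hl d by simp
  have "(\<Sum>j. ennreal (2 powr ((1 - hl / h) * real j) * eta nu j)) \<noteq> \<top>"
  proof
    assume "(\<Sum>j. ennreal (2 powr ((1 - hl / h) * real j) * eta nu j)) = \<top>"
    then have "ereal h \<in> ereal ` {h. h > 0 \<and> (\<Sum>j. ennreal (2 powr ((1 - hl / h) * real j) * eta nu j)) = \<top>}"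
      using h by auto
    then have "htilde nu hl \<le> ereal h" unfolding htilde_def by (rule Inf_lower)
    then show False using ht by simp
  qed
  then have "summable (\<lambda>j. 2 powr ((1 - \<delta>) * real j) * eta nu j)"
    unfolding hh by (intro summable_suminf_not_top) (auto simp: eta_nonneg)
  then have "(\<lambda>j. 2 powr ((1 - \<delta>) * real j) * eta nu j) \<longlonglongrightarrow> 0" by (rule summable_LIMSEQ_zero)
  then have "eventually (\<lambda>j. 2 powr ((1 - \<delta>) * real j) * eta nu j < 1) sequentially"
    by (rule order_tendstoD) simp
  then show ?thesis
  proof eventually_elim
    case (elim k)
    have "2 ^ k * eta nu k = 2 powr (\<delta> * real k) * (2 powr ((1 - \<delta>) * real k) * eta nu k)"
      by (simp add: powr_realpow[symmetric] powr_add[symmetric] algebra_simps)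
    also have "\<dots> \<le> 2 powr (\<delta> * real k) * 1" using elim by (intro mult_left_mono) auto
    also have "\<dots> = (2 powr \<delta>) ^ k" by (simp add: powr_realpow[symmetric] powr_powr mult.commute)
    finally show ?case .
  qed
qed

lemma P_growth:
  assumes th: "theta nu = ereal t" and t: "t \<ge> 0" and jl: "jlow nu = enat J" and d: "\<delta> > 0"
  shows "eventually (\<lambda>k. (\<Prod>l\<in>{J..<Suc k}. gamma nu l) * (2 powr \<delta>) ^ k \<ge> 1) sequentially"
proof -
  have ex: "\<exists>j0. \<forall>j\<ge>j0. gamma nu j > 0"
    using jl unfolding jlow_def by (metis enat_ord_simps(4) infinity_ne_i0 not_infinity_eq)
  then have JJ: "J = (LEAST j0. \<forall>j\<ge>j0. gamma nu j > 0)" using jl unfolding jlow_def by simp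
  have pos: "\<And>j. j \<ge> J \<Longrightarrow> gamma nu j > 0" unfolding JJ using LeastI_ex[OF ex] by blast
  define f where "f j = ereal ((\<Sum>l\<in>{J..j}. ln (gamma nu l)) / (real j * ln 2))" for j
  have thf: "theta nu = liminf f" unfolding theta_def jl f_def by simp
  have "ereal (t - \<delta>) < liminf f" using th thf d by simp
  then have "eventually (\<lambda>k. f k > ereal (t - \<delta>)) sequentially" by (rule less_LiminfD)
  moreover have "eventually (\<lambda>k. k \<ge> max J 1) sequentially" by (rule eventually_ge_at_top)
  ultimately show ?thesis
  proof eventually_elim
    case (elim k)
    then have kJ: "k \<ge> J" and k1: "k \<ge> 1" by auto
    have "t - \<delta> < (\<Sum>l\<in>{J..k}. ln (gamma nu l)) / (real k * ln 2)" using elim unfolding f_def by simp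
    then have S: "(t - \<delta>) * (real k * ln 2) < (\<Sum>l\<in>{J..k}. ln (gamma nu l))"
      using k1 by (simp add: pos_less_divide_eq)
    have "1 / (2 powr \<delta>) ^ k = exp (- (\<delta> * (real k * ln 2)))"
      by (simp add: powr_realpow[symmetric] powr_powr powr_def exp_minus field_simps)
    also have "\<dots> \<le> exp ((t - \<delta>) * (real k * ln 2))"
      using t k1 by (intro exp_le_cancel_iff[THEN iffD2]) (simp add: algebra_simps)
    also have "\<dots> \<le> exp (\<Sum>l\<in>{J..k}. ln (gamma nu l))" using S by simp
    also have "\<dots> = (\<Prod>l\<in>{J..k}. gamma nu l)" by (simp add: exp_sum pos)
    also have "\<dots> = (\<Prod>l\<in>{J..<Suc k}. gamma nu l)" by (simp add: atLeastLessThanSuc_atLeastAtMost)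
    finally show ?case by (simp add: field_simps)
  qed
qed

lemma jlow_pos: "jlow nu = enat J \<Longrightarrow> j \<ge> J \<Longrightarrow> gamma nu j > 0"
proof -
  assume jl: "jlow nu = enat J" and j: "j \<ge> J"
  have ex: "\<exists>j0. \<forall>j\<ge>j0. gamma nu j > 0"
    using jl unfolding jlow_def by (metis enat_ord_simps(4) infinity_ne_i0 not_infinity_eq)
  then have JJ: "J = (LEAST j0. \<forall>j\<ge>j0. gamma nu j > 0)" using jl unfolding jlow_def by simp
  show ?thesis using j unfolding JJ using LeastI_ex[OF ex] by blast
qed

context bp
begin

lemma null_if_small:
  assumes A: "A \<in> sets M" and sm: "\<And>\<epsilon>. \<epsilon> > 0 \<Longrightarrow> prob A \<le> \<epsilon>"
  shows "A \<in> null_sets M"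
proof -
  have "prob A \<le> 0"
  proof (rule ccontr)
    assume "\<not> prob A \<le> 0"
    then have "prob A > 0" by simp
    then have "prob A \<le> prob A / 2" using sm[of "prob A / 2"] by simp
    then show False using \<open>prob A > 0\<close> by simp
  qed
  then have "prob A = 0" using measure_nonneg[of M A] by linarith
  then show ?thesis using A by (simp add: null_setsI emeasure_eq_measure)
qed

definition Zv :: "bool list \<Rightarrow> 'a set" where
  "Zv v = {\<omega>\<in>space M. \<forall>w'. \<not> X (v @ w') \<omega>}"

lemma Zv_M: "Zv v \<in> sets M"
proof -
  have "Zv v = (\<Inter>k\<in>UNIV. Zk v k)"
    unfolding Zv_def Zk_def by auto
  moreover have "(\<Inter>k\<in>(UNIV::nat set). Zk v k) \<in> sets M"
    by (rule sets.countable_INT) (auto simp: Zk_ZS ZS_M)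
  ultimately show ?thesis by simp
qed

lemma Zv_null:
  assumes div: "(\<Sum>j. ennreal (2 ^ j * eta nu j)) = \<top>"
  shows "Zv v \<in> null_sets M"
proof (rule null_if_small[OF Zv_M])
  fix \<epsilon> :: real assume e: "\<epsilon> > 0"
  obtain k where k: "(\<Prod>i<k. (1 - eta nu (length v + i)) ^ (2 ^ i)) \<le> \<epsilon>"
    using zero_tree_small[OF div e] by blast
  have "Zv v \<subseteq> Zk v k" unfolding Zv_def Zk_def by auto
  then have "prob (Zv v) \<le> prob (Zk v k)" by (intro finite_measure_mono) (auto simp: Zk_ZS ZS_M)
  also have "\<dots> \<le> \<epsilon>" using prob_Zk_le[of v k] k by linarith
  finally show "prob (Zv v) \<le> \<epsilon>" .
qed

definition Full :: "bool list \<Rightarrow> 'a set" where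
  "Full u = {\<omega>\<in>space M. \<forall>w. X (u @ w) \<omega>}"

lemma Full_M: "Full u \<in> sets M"
proof -
  have "Full u = (\<Inter>w\<in>UNIV. {\<omega>\<in>space M. X (u @ w) \<omega>})"
    unfolding Full_def by auto
  moreover have "(\<Inter>w\<in>(UNIV::bool list set). {\<omega>\<in>space M. X (u @ w) \<omega>}) \<in> sets M"
    by (rule sets.countable_INT) (auto simp: measX)
  ultimately show ?thesis by simp
qed

lemma Full_null:
  assumes th: "theta nu < 1"
  shows "Full u \<in> null_sets M"
proof (rule null_if_small[OF Full_M])
  fix \<epsilon> :: real assume e: "\<epsilon> > 0"
  obtain n where n: "(\<Prod>i<n. gamma nu (length u + i)) \<le> \<epsilon> * 2 powr (1 * real n)"
    using gamma_small[of nu 1 \<epsilon> "length u"] th e by (auto simp: one_ereal_def)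
  have sub: "Full u \<subseteq> Pth u w" for w unfolding Full_def Pth_def by auto
  have "2 ^ n * prob (Full u) = (\<Sum>w\<in>L n. prob (Full u))" by (simp add: card_L)
  also have "\<dots> \<le> (\<Sum>w\<in>L n. prob (Pth u w))"
    using sub by (intro sum_mono finite_measure_mono) (auto simp: Pth_M)
  also have "\<dots> \<le> (\<Prod>i<n. gamma nu (length u + i))" by (rule a_le)
  also have "\<dots> \<le> \<epsilon> * 2 ^ n" using n by (simp add: powr_realpow)
  finally show "prob (Full u) \<le> \<epsilon>" by simp
qed

lemma part1:
  assumes div: "(\<Sum>j. ennreal (2 ^ j * eta nu j)) = \<top>" and th: "theta nu < 1"
  shows "AE \<omega> in M. \<forall>u. \<exists>w. w \<noteq> [] \<and> u @ w \<in> Stilde X \<omega>"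
proof -
  have "AE \<omega> in M. \<exists>w. w \<noteq> [] \<and> u @ w \<in> Stilde X \<omega>" for u
  proof (rule AE_I')
    show "Full u \<union> (\<Union>w. Zv (u @ w)) \<in> null_sets M"
      using Full_null[OF th] Zv_null[OF div] by auto
    show "{\<omega>\<in>space M. \<not> (\<exists>w. w \<noteq> [] \<and> u @ w \<in> Stilde X \<omega>)} \<subseteq> Full u \<union> (\<Union>w. Zv (u @ w))"
    proof
      fix \<omega> assume a: "\<omega> \<in> {\<omega>\<in>space M. \<not> (\<exists>w. w \<noteq> [] \<and> u @ w \<in> Stilde X \<omega>)}"
      then have sp: "\<omega> \<in> space M" and nb: "\<And>w. w \<noteq> [] \<Longrightarrow> X (u @ w) \<omega> \<Longrightarrow> X (butlast (u @ w)) \<omega>"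
        unfolding Stilde_def by auto
      show "\<omega> \<in> Full u \<union> (\<Union>w. Zv (u @ w))"
      proof (cases "\<omega> \<in> Full u")
        case True then show ?thesis by simp
      next
        case False
        then obtain w where w: "\<not> X (u @ w) \<omega>" unfolding Full_def using sp by auto
        have "\<not> X (u @ w @ w') \<omega>" for w'
        proof (induction w' rule: rev_induct)
          case Nil then show ?case using w by simp
        next
          case (snoc b w')
          show ?case
          proof
            assume "X (u @ w @ w' @ [b]) \<omega>"
            then have "X (butlast (u @ (w @ w' @ [b]))) \<omega>" using nb[of "w @ w' @ [b]"] by simp
            then have "X (u @ w @ w') \<omega>" by (simp add: butlast_append)
            then show False using snoc by simp
          qed
        qed
        then have "\<omega> \<in> Zv (u @ w)" unfolding Zv_def using sp by simp
        then show ?thesis by blast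
      qed
    qed
  qed
  then show ?thesis by (subst AE_all_countable) auto
qed

definition Bd :: "bool list \<Rightarrow> 'a set" where
  "Bd u = (\<Inter>n\<in>UNIV. \<Union>w\<in>L n. Pth u w)"

lemma Bd_M: "Bd u \<in> sets M"
  unfolding Bd_def
  by (rule sets.countable_INT) (auto intro!: sets.finite_UN simp: Pth_M)

lemma Bd_null:
  assumes th: "theta nu < 0"
  shows "Bd u \<in> null_sets M"
proof (rule null_if_small[OF Bd_M])
  fix \<epsilon> :: real assume e: "\<epsilon> > 0"
  obtain n where n: "(\<Prod>i<n. gamma nu (length u + i)) \<le> \<epsilon> * 2 powr (0 * real n)"
    using gamma_small[of nu 0 \<epsilon> "length u"] th e by (auto simp: zero_ereal_def)
  have "prob (Bd u) \<le> prob (\<Union>w\<in>L n. Pth u w)"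
    by (rule finite_measure_mono) (auto simp: Bd_def intro!: sets.finite_UN Pth_M)
  also have "\<dots> \<le> (\<Sum>w\<in>L n. prob (Pth u w))"
    by (rule finite_measure_subadditive_finite) (auto simp: Pth_M)
  also have "\<dots> \<le> (\<Prod>i<n. gamma nu (length u + i))" by (rule a_le)
  also have "\<dots> \<le> \<epsilon>" using n by simp
  finally show "prob (Bd u) \<le> \<epsilon>" .
qed

lemma boundary_Bd:
  assumes sp: "\<omega> \<in> space M" and z: "\<zeta> \<in> boundary X \<omega> u"
  shows "\<omega> \<in> Bd u"
proof -
  have bz: "\<And>j. j \<ge> length u \<Longrightarrow> map \<zeta> [0..<j] \<in> tau X \<omega> u" using z unfolding boundary_def by auto
  have pre: "map \<zeta> [0..<length u] = u"
  proof -
    obtain w where w: "map \<zeta> [0..<length u] = u @ w" using bz[of "length u"] unfolding tau_def by auto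
    then have "length (map \<zeta> [0..<length u]) = length (u @ w)" by simp
    then have "w = []" by simp
    then show ?thesis using w by simp
  qed
  have "\<omega> \<in> Pth u (map \<zeta> [length u..<length u + n])" for n
    unfolding Pth_def
  proof (intro CollectI conjI allI impI sp)
    fix i assume i: "i \<le> length (map \<zeta> [length u..<length u + n])"
    then have i': "i \<le> n" by simp
    have eq: "map \<zeta> [0..<length u + i] = u @ take i (map \<zeta> [length u..<length u + n])"
    proof -
      have "map \<zeta> [0..<length u + i] = map \<zeta> [0..<length u] @ map \<zeta> [length u..<length u + i]"
        by (simp add: upt_add_eq_append[of 0 "length u" i])
      also have "take i (map \<zeta> [length u..<length u + n]) = map \<zeta> [length u..<length u + i]"
        using i' by (simp add: take_map take_upt min_def)
      ultimately show ?thesis using pre by simp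
    qed
    have "map \<zeta> [0..<length u + i] \<in> tau X \<omega> u" by (rule bz) simp
    then have "\<forall>j\<in>{length u..length (map \<zeta> [0..<length u + i])}. X (take j (map \<zeta> [0..<length u + i])) \<omega>"
      unfolding tau_def by blast
    then have "X (take (length (map \<zeta> [0..<length u + i])) (map \<zeta> [0..<length u + i])) \<omega>"
      by (metis atLeastAtMost_iff le_add1 length_map length_upt minus_nat.diff_0 order_refl)
    then have "X (map \<zeta> [0..<length u + i]) \<omega>" by (simp only: take_all order_refl)
    then show "X (u @ take i (map \<zeta> [length u..<length u + n])) \<omega>" using eq by simp
  qed
  moreover have "map \<zeta> [length u..<length u + n] \<in> L n" for n unfolding L_def by simp
  ultimately show ?thesis unfolding Bd_def by blast
qed

lemma part3a:
  assumes th: "theta nu < 0"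
  shows "AE \<omega> in M. Theta X \<omega> = {}"
proof (rule AE_I')
  show "(\<Union>u. Bd u) \<in> null_sets M" using Bd_null[OF th] by auto
  show "{\<omega>\<in>space M. \<not> Theta X \<omega> = {}} \<subseteq> (\<Union>u. Bd u)"
  proof
    fix \<omega> assume "\<omega> \<in> {\<omega>\<in>space M. \<not> Theta X \<omega> = {}}"
    then obtain u \<zeta> where "\<omega> \<in> space M" "\<zeta> \<in> boundary X \<omega> u" unfolding Theta_def by auto
    then show "\<omega> \<in> (\<Union>u. Bd u)" using boundary_Bd by blast
  qed
qed

lemma card_Stilde: "\<omega> \<in> space M \<Longrightarrow> card (Stilde_j X \<omega> j) = card {v\<in>L j. \<omega> \<in> Ev v}"
  unfolding Stilde_j_def Stilde_def Ev_def L_def by (rule arg_cong[where f=card]) auto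

lemma Ev_set_eq:
  assumes sp: "\<omega> \<in> space M" "\<omega>' \<in> space M" and "\<forall>v\<in>L j \<union> butlast ` L j. X v \<omega> = X v \<omega>'"
  shows "{v\<in>L j. \<omega> \<in> Ev v} = {v\<in>L j. \<omega>' \<in> Ev v}"
proof (rule Collect_cong)
  fix v
  show "(v \<in> L j \<and> \<omega> \<in> Ev v) = (v \<in> L j \<and> \<omega>' \<in> Ev v)"
  proof (cases "v \<in> L j")
    case True
    then have "X v \<omega> = X v \<omega>'" "X (butlast v) \<omega> = X (butlast v) \<omega>'" using assms by auto
    then show ?thesis using True sp unfolding Ev_def by auto
  qed simp
qed

lemma Ev_set_eq': "\<omega> \<in> space M \<Longrightarrow> \<omega>' \<in> space M \<Longrightarrow> \<forall>v\<in>L j \<union> butlast ` L j. X v \<omega> = X v \<omega>'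
   \<Longrightarrow> Q (card {v\<in>L j. \<omega> \<in> Ev v}) = Q (card {v\<in>L j. \<omega>' \<in> Ev v})"
  using Ev_set_eq[of \<omega> \<omega>' j] by simp

lemma event_card: "{\<omega>\<in>space M. Q (card {v\<in>L j. \<omega> \<in> Ev v})} \<in> sets M"
  apply (rule event_M[where V="L j \<union> butlast ` L j"])
   apply simp
  apply (rule Ev_set_eq')
    apply assumption+
  done

definition Bt :: "nat \<Rightarrow> 'a set" where
  "Bt j = {\<omega>\<in>space M. real (Suc j)^2 * 2 ^ Suc j * eta nu j < real (card {v\<in>L (Suc j). \<omega> \<in> Ev v})}"

lemma Bt_M: "Bt j \<in> sets M"
  unfolding Bt_def by (rule event_card)

lemma prob_Bt0: "eta nu j = 0 \<Longrightarrow> prob (Bt j) = 0"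
proof -
  assume e0: "eta nu j = 0"
  have "Bt j = {\<omega>\<in>space M. 1 \<le> real (card {v\<in>L (Suc j). \<omega> \<in> Ev v})}"
    unfolding Bt_def e0 by auto
  then have "prob (Bt j) \<le> TE (Suc j) / 1"
    unfolding TE_def by (simp only:) (rule count_markov, auto simp: Ev_M)
  also have "\<dots> \<le> 0" using TE_Suc[of j] e0 by simp
  finally show ?thesis using measure_nonneg[of M "Bt j"] by linarith
qed

lemma prob_Bt: "prob (Bt j) \<le> 1 / (real (Suc j))^2"
proof (cases "eta nu j = 0")
  case True
  then show ?thesis using prob_Bt0 by simp
next
  case False
  define T where "T = real (Suc j)^2 * 2 ^ Suc j * eta nu j"
  have Tp: "T > 0" unfolding T_def using False eta_nonneg[of nu j] by simp
  have "Bt j \<subseteq> {\<omega>\<in>space M. T \<le> real (card {v\<in>L (Suc j). \<omega> \<in> Ev v})}"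
    unfolding Bt_def T_def by auto
  then have "prob (Bt j) \<le> prob {\<omega>\<in>space M. T \<le> real (card {v\<in>L (Suc j). \<omega> \<in> Ev v})}"
    by (intro finite_measure_mono event_card)
  also have "\<dots> \<le> TE (Suc j) / T"
    unfolding TE_def by (rule count_markov) (auto simp: Ev_M Tp)
  also have "\<dots> \<le> (2 ^ Suc j * eta nu j) / T"
    using TE_Suc[of j] Tp by (simp add: divide_right_mono)
  also have "\<dots> = 1 / (real (Suc j))^2"
    unfolding T_def using False by (simp add: field_simps)
  finally show ?thesis .
qed

lemma part2:
  "AE \<omega> in M. \<exists>\<kappa>t::real. \<kappa>t \<ge> 1 \<and> (\<forall>j\<ge>1.
        real (card (Stilde_j X \<omega> j)) \<le> \<kappa>t * 2 ^ j * eta nu (j - 1) * real j ^ 2)"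
proof -
  have bc: "AE \<omega> in M. eventually (\<lambda>j. \<omega> \<in> space M - Bt j) sequentially"
  proof (rule borel_cantelli_AE1)
    show "\<And>j. Bt j \<in> sets M" by (rule Bt_M)
    show "\<And>j. emeasure M (Bt j) < \<infinity>" by (simp add: less_top[symmetric])
    show "summable (\<lambda>j. prob (Bt j))"
      by (rule summable_comparison_test'[OF summable_inv_sq]) (metis prob_Bt measure_nonneg real_norm_def abs_of_nonneg)
  qed
  have z: "AE \<omega> in M. \<forall>j. eta nu j = 0 \<longrightarrow> \<omega> \<notin> Bt j"
  proof (subst AE_all_countable, intro allI)
    fix j
    show "AE \<omega> in M. eta nu j = 0 \<longrightarrow> \<omega> \<notin> Bt j"
    proof (cases "eta nu j = 0")
      case True
      then have "Bt j \<in> null_sets M" using Bt_M prob_Bt0[OF True]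
        by (simp add: null_setsI emeasure_eq_measure)
      then show ?thesis by (rule AE_I') auto
    qed simp
  qed
  show ?thesis
    using bc z
  proof eventually_elim
    case (elim \<omega>)
    from elim(1) obtain N where N: "\<And>j. j \<ge> N \<Longrightarrow> \<omega> \<in> space M - Bt j"
      unfolding eventually_sequentially by auto
    then have sp: "\<omega> \<in> space M" by auto
    define a where "a j = real (card (Stilde_j X \<omega> (Suc j)))" for j
    define T where "T j = real (Suc j)^2 * 2 ^ Suc j * eta nu j" for j
    have ca: "a j = real (card {v\<in>L (Suc j). \<omega> \<in> Ev v})" for j
      unfolding a_def using card_Stilde[OF sp] by simp
    have "\<exists>\<kappa>\<ge>1. \<forall>j. a j \<le> \<kappa> * T j"
    proof (rule kappa_exists[of T a N])
      show "0 \<le> T j" for j unfolding T_def by (simp add: eta_nonneg)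
      show "a j \<le> 0" if "T j = 0" for j
      proof -
        have "eta nu j = 0" using that unfolding T_def by simp
        then have "\<omega> \<notin> Bt j" using elim(2) by simp
        then show ?thesis unfolding ca Bt_def using sp \<open>eta nu j = 0\<close> by simp
      qed
      show "a j \<le> T j" if "j \<ge> N" for j
        using N[OF that] sp unfolding ca Bt_def T_def by auto
    qed
    then obtain \<kappa> where k: "\<kappa> \<ge> 1" "\<And>j. a j \<le> \<kappa> * T j" by blast
    have "real (card (Stilde_j X \<omega> j)) \<le> \<kappa> * 2 ^ j * eta nu (j - 1) * real j ^ 2" if j1: "j \<ge> 1" for j
    proof -
      obtain j' where j': "j = Suc j'" using j1 by (cases j) auto
      show ?thesis using k(2)[of j'] unfolding a_def T_def j' by (simp add: mult_ac)
    qed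
    then show ?case using k(1) by blast
  qed
qed

lemma SX_set_eq: "\<forall>v\<in>L j. X v \<omega> = X v \<omega>' \<Longrightarrow> Q (card {v\<in>L j. X v \<omega>}) = Q (card {v\<in>L j. X v \<omega>'})"
proof -
  assume a: "\<forall>v\<in>L j. X v \<omega> = X v \<omega>'"
  have "{v\<in>L j. X v \<omega>} = {v\<in>L j. X v \<omega>'}" using a by auto
  then show ?thesis by simp
qed

lemma event_SX: "{\<omega>\<in>space M. Q (card {v\<in>L j. X v \<omega>})} \<in> sets M"
  apply (rule event_M[where V="L j"])
   apply simp
  apply (rule SX_set_eq)
  apply assumption
  done

lemma markov_SX:
  assumes c: "c > 0"
  shows "prob {\<omega>\<in>space M. c \<le> real (card {v\<in>L j. X v \<omega>})} \<le> SE j / c"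
proof -
  have "{\<omega>\<in>space M. c \<le> real (card {v\<in>L j. X v \<omega>})} = {\<omega>\<in>space M. c \<le> real (card {v\<in>L j. \<omega> \<in> {\<omega>\<in>space M. X v \<omega>}})}"
    by auto
  also have "prob \<dots> \<le> (\<Sum>v\<in>L j. prob {\<omega>\<in>space M. X v \<omega>}) / c"
    by (rule count_markov) (auto simp: c measX)
  finally show ?thesis unfolding SE_def .
qed

lemma part3b:
  assumes th0: "theta nu \<ge> 0" and th1: "theta nu < 1" and ht: "htilde nu hl = \<infinity>" and hl: "hl > 0"
  shows "AE \<omega> in M. \<exists>\<kappa>::real. \<kappa> \<ge> 1 \<and> (\<forall>j.
        real (card (S_set X \<omega> j)) \<le> \<kappa> * 2 powr ((1 - real_of_ereal (theta nu)) * real j / 2)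
            * (\<Prod>l\<in>{the_enat (jlow nu)..<j}. gamma nu l))"
proof -
  obtain J where jl: "jlow nu = enat J"
  proof (cases "jlow nu")
    case (enat J) then show ?thesis using that by simp
  next
    case infinity then have "theta nu = -\<infinity>" unfolding theta_def by simp
    then show ?thesis using th0 by simp
  qed
  obtain t where th: "theta nu = ereal t" using th0 th1 by (cases "theta nu") auto
  have t0: "t \<ge> 0" and t1: "t < 1" using th0 th1 th by auto
  have pos: "\<And>j. j \<ge> J \<Longrightarrow> gamma nu j > 0" using jlow_pos[OF jl] .
  define P where "P j = (\<Prod>l\<in>{J..<j}. gamma nu l)" for j
  have Ppos: "P j > 0" for j unfolding P_def using pos by (intro prod_pos) auto
  have PSuc: "P (Suc k) = gamma nu k * P k" if "k \<ge> J" for k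
    unfolding P_def using that by (simp add: prod.atLeastLessThan_Suc mult.commute)
  define \<alpha> where "\<alpha> = (1 - t) / 2"
  have \<alpha>: "\<alpha> > 0" unfolding \<alpha>_def using t1 by simp
  define \<delta> where "\<delta> = \<alpha> / 4"
  have \<delta>: "\<delta> > 0" unfolding \<delta>_def using \<alpha> by simp
  define z where "z = 2 powr \<delta>"
  define x where "x = z ^ 2"
  define y where "y = 2 powr \<alpha>"
  have z1: "z > 1" unfolding z_def using \<delta> by simp
  have x1: "x > 1" unfolding x_def using z1 by (simp add: one_less_power)
  have xeq: "x = 2 powr (\<alpha> / 2)" unfolding x_def z_def \<delta>_def
    by (simp add: powr_realpow[symmetric] powr_powr)
  have xy: "x < y" unfolding xeq y_def using \<alpha> by simp
  have y0: "y > 0" unfolding y_def by simp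
  have ev1: "eventually (\<lambda>k. 2 ^ k * eta nu k \<le> z ^ k) sequentially"
    unfolding z_def by (rule eta_growth[OF ht hl \<delta>])
  have ev2: "eventually (\<lambda>k. P (Suc k) * z ^ k \<ge> 1) sequentially"
    unfolding z_def P_def by (rule P_growth[OF th t0 jl \<delta>])
  have "eventually (\<lambda>k. 2 ^ k * eta nu k \<le> z ^ k \<and> P (Suc k) * z ^ k \<ge> 1 \<and> k \<ge> J) sequentially"
    using ev1 ev2 eventually_ge_at_top[of J] by eventually_elim auto
  then obtain K1 where K1: "\<And>k. k \<ge> K1 \<Longrightarrow> 2 ^ k * eta nu k \<le> z ^ k \<and> P (Suc k) * z ^ k \<ge> 1 \<and> k \<ge> J"
    unfolding eventually_sequentially by blast
  define r where "r k = SE k / P k" for k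
  have step: "r (Suc k) \<le> r k + 2 * x ^ k" if k: "k \<ge> K1" for k
  proof -
    have e: "2 ^ k * eta nu k \<le> z ^ k" and p: "P (Suc k) * z ^ k \<ge> 1" and kJ: "k \<ge> J" using K1[OF k] by auto
    have g: "gamma nu k > 0" using pos kJ by simp
    have "r (Suc k) = SE (Suc k) / P (Suc k)" unfolding r_def ..
    also have "\<dots> \<le> (gamma nu k * SE k + 2 * (2 ^ k * eta nu k)) / P (Suc k)"
      using SE_Suc[of k] Ppos[of "Suc k"] by (intro divide_right_mono) auto
    also have "\<dots> = r k + 2 * (2 ^ k * eta nu k) / P (Suc k)"
      unfolding r_def PSuc[OF kJ] using g Ppos[of k] by (simp add: field_simps)
    also have "2 * (2 ^ k * eta nu k) / P (Suc k) \<le> 2 * x ^ k"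
    proof -
      have "1 / P (Suc k) \<le> z ^ k" using p Ppos[of "Suc k"] by (simp add: divide_le_eq mult.commute)
      then have "(2 ^ k * eta nu k) * (1 / P (Suc k)) \<le> z ^ k * z ^ k"
        using e z1 Ppos[of "Suc k"] by (intro mult_mono) (auto simp: eta_nonneg less_imp_le)
      then show ?thesis unfolding x_def by (simp add: power2_eq_square power_mult_distrib)
    qed
    finally show ?thesis by simp
  qed
  have rb: "r k \<le> r K1 + (2 / (x - 1)) * x ^ k" if "k \<ge> K1" for k
    by (rule recur_bound[OF x1 step that])
  define C where "C j = {\<omega>\<in>space M. y ^ j * P j \<le> real (card {v\<in>L j. X v \<omega>})}" for j
  have C_M: "C j \<in> sets M" for j unfolding C_def by (rule event_SX)
  have probC: "prob (C j) \<le> r j / y ^ j" for j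
  proof -
    have "prob (C j) \<le> SE j / (y ^ j * P j)" unfolding C_def
      by (rule markov_SX) (use Ppos y0 in simp)
    then show ?thesis unfolding r_def by (simp add: field_simps)
  qed
  have summ: "summable (\<lambda>j. prob (C j))"
  proof (rule summable_comparison_test'[where N=K1])
    show "summable (\<lambda>j. \<bar>r K1\<bar> * (1 / y) ^ j + (2 / (x - 1)) * (x / y) ^ j)"
      using x1 xy y0 by (intro summable_add summable_mult summable_geometric) auto
    fix j assume j: "j \<ge> K1"
    have "norm (prob (C j)) = prob (C j)" by simp
    also have "\<dots> \<le> r j / y ^ j" by (rule probC)
    also have "\<dots> \<le> (r K1 + (2 / (x - 1)) * x ^ j) / y ^ j" using rb[OF j] y0 by (intro divide_right_mono) auto
    also have "\<dots> \<le> \<bar>r K1\<bar> * (1 / y) ^ j + (2 / (x - 1)) * (x / y) ^ j"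
      using y0 by (simp add: add_divide_distrib power_divide divide_right_mono)
    finally show "norm (prob (C j)) \<le> \<bar>r K1\<bar> * (1 / y) ^ j + (2 / (x - 1)) * (x / y) ^ j" .
  qed
  have bc: "AE \<omega> in M. eventually (\<lambda>j. \<omega> \<in> space M - C j) sequentially"
    by (rule borel_cantelli_AE1[OF C_M _ summ]) (simp add: less_top[symmetric])
  show ?thesis
    using bc
  proof eventually_elim
    case (elim \<omega>)
    from elim obtain N where N: "\<And>j. j \<ge> N \<Longrightarrow> \<omega> \<in> space M - C j"
      unfolding eventually_sequentially by auto
    define a where "a j = real (card (S_set X \<omega> j))" for j
    define T where "T j = y ^ j * P j" for j
    have ca: "a j = real (card {v\<in>L j. X v \<omega>})" for j
      unfolding a_def S_set_def L_def by (simp add: conj_commute)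
    have "\<exists>\<kappa>\<ge>1. \<forall>j. a j \<le> \<kappa> * T j"
    proof (rule kappa_exists[of T a N])
      show "0 \<le> T j" for j unfolding T_def using Ppos[of j] y0 by simp
      show "a j \<le> 0" if "T j = 0" for j using that Ppos[of j] y0 unfolding T_def by simp
      show "a j \<le> T j" if "j \<ge> N" for j
        using N[OF that] unfolding ca C_def T_def by auto
    qed
    then obtain \<kappa> where k: "\<kappa> \<ge> 1" "\<And>j. a j \<le> \<kappa> * T j" by blast
    have yj: "y ^ j = 2 powr ((1 - real_of_ereal (theta nu)) * real j / 2)" for j
      unfolding y_def \<alpha>_def th by (simp add: powr_realpow[symmetric] powr_powr)
    have "real (card (S_set X \<omega> j)) \<le> \<kappa> * 2 powr ((1 - real_of_ereal (theta nu)) * real j / 2)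
            * (\<Prod>l\<in>{the_enat (jlow nu)..<j}. gamma nu l)" for j
      using k(2)[of j] unfolding a_def T_def P_def yj jl by (simp add: mult_ac)
    then show ?case using k(1) by blast
  qed
qed

end

theorem mainTheorem11:
  fixes M :: "'a measure"
    and nu :: "bool \<Rightarrow> nat \<Rightarrow> (bool \<times> bool) pmf"
    and X :: "bool list \<Rightarrow> 'a \<Rightarrow> bool"
    and hl :: real
  assumes proc: "branching_process M nu X"
    and hl_pos: "hl > 0"
    and div: "(\<Sum>j. ennreal (2 ^ j * eta nu j)) = \<top>"
    and theta_lt: "theta nu < 1"
    and htilde_inf: "htilde nu hl = \<infinity>"
  shows "AE \<omega> in M.
     (\<forall>u. \<exists>w. w \<noteq> [] \<and> u @ w \<in> Stilde X \<omega>) \<and>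
     (\<exists>\<kappa>t::real. \<kappa>t \<ge> 1 \<and> (\<forall>j\<ge>1.
        real (card (Stilde_j X \<omega> j)) \<le> \<kappa>t * 2 ^ j * eta nu (j - 1) * real j ^ 2)) \<and>
     (theta nu < 0 \<longrightarrow> Theta X \<omega> = {}) \<and>
     (theta nu \<ge> 0 \<longrightarrow> (\<exists>\<kappa>::real. \<kappa> \<ge> 1 \<and> (\<forall>j.
        real (card (S_set X \<omega> j)) \<le> \<kappa> * 2 powr ((1 - real_of_ereal (theta nu)) * real j / 2)
            * (\<Prod>l\<in>{the_enat (jlow nu)..<j}. gamma nu l))))"
proof -
  interpret bp M nu X by (rule bp.intro[OF proc])
  have 1: "AE \<omega> in M. \<forall>u. \<exists>w. w \<noteq> [] \<and> u @ w \<in> Stilde X \<omega>" by (rule part1[OF div theta_lt])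
  have 2: "AE \<omega> in M. \<exists>\<kappa>t::real. \<kappa>t \<ge> 1 \<and> (\<forall>j\<ge>1.
        real (card (Stilde_j X \<omega> j)) \<le> \<kappa>t * 2 ^ j * eta nu (j - 1) * real j ^ 2)" by (rule part2)
  have 3: "AE \<omega> in M. theta nu < 0 \<longrightarrow> Theta X \<omega> = {}"
    using part3a by (cases "theta nu < 0") auto
  have 4: "AE \<omega> in M. theta nu \<ge> 0 \<longrightarrow> (\<exists>\<kappa>::real. \<kappa> \<ge> 1 \<and> (\<forall>j.
        real (card (S_set X \<omega> j)) \<le> \<kappa> * 2 powr ((1 - real_of_ereal (theta nu)) * real j / 2)
            * (\<Prod>l\<in>{the_enat (jlow nu)..<j}. gamma nu l)))"
    using part3b[OF _ theta_lt htilde_inf hl_pos] by (cases "theta nu \<ge> 0") auto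
  from 1 2 3 4 show ?thesis by eventually_elim blast
qed

end
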